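(* Let $\Phi$ be an irreducible reduced root system with basis $\Delta$, Weyl group $W$ with length function $l$, highest root $\tilde\alpha$. For every positive long root $\alpha$, $l(x_\alpha s_{\tilde\alpha})=l(s_{\tilde\alpha})-l(x_\alpha)$.
   Context: Long roots are those of maximal length for a $W$-invariant scalar product $(\cdot|\cdot)$. $\tilde I=\{\alpha\in\Delta:(\tilde\alpha|\alpha)=0\}$, $\Phi_{\tilde I}^+$ the positive roots in the span of $\tilde I$, $X_{\tilde I}=\{w\in W:w(\Phi^+_{\tilde I})\subset\Phi^+\}$; for a long root $\alpha$, $x_\alpha$ is the unique element of $X_{\tilde I}$ with $x_\alpha(\tilde\alpha)=\alpha$ (it exists and is unique since $w\mapsto w(\tilde\alpha)$ induces a bijection $X_{\tilde I}\to\Phi_{\mathrm{lg}}$). *)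

theory Defs
  imports "HOL-Analysis.Analysis"
begin

text \<open>Root systems in a finite-dimensional real inner product space 'a (the ambient
  inner product plays the role of the W-invariant scalar product).\<close>

definition refl :: "'a::euclidean_space \<Rightarrow> 'a \<Rightarrow> 'a" where
  "refl a v = v - (2 * (v \<bullet> a) / (a \<bullet> a)) *\<^sub>R a"

definition root_system :: "'a::euclidean_space set \<Rightarrow> bool" where
  "root_system Phi \<longleftrightarrow> finite Phi \<and> 0 \<notin> Phi \<and> span Phi = UNIV \<and>
     (\<forall>a\<in>Phi. refl a ` Phi = Phi) \<and>
     (\<forall>a\<in>Phi. \<forall>b\<in>Phi. 2 * (b \<bullet> a) / (a \<bullet> a) \<in> \<int>)"

definition reduced_root_system :: "'a::euclidean_space set \<Rightarrow> bool" where
  "reduced_root_system Phi \<longleftrightarrow> root_system Phi \<and>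
     (\<forall>a\<in>Phi. \<forall>c::real. c *\<^sub>R a \<in> Phi \<longrightarrow> c = 1 \<or> c = -1)"

definition irreducible_root_system :: "'a::euclidean_space set \<Rightarrow> bool" where
  "irreducible_root_system Phi \<longleftrightarrow> root_system Phi \<and> Phi \<noteq> {} \<and>
     \<not> (\<exists>A B. A \<noteq> {} \<and> B \<noteq> {} \<and> A \<union> B = Phi \<and> A \<inter> B = {} \<and>
            (\<forall>a\<in>A. \<forall>b\<in>B. a \<bullet> b = 0))"

definition nonneg_int_comb :: "'a::euclidean_space set \<Rightarrow> 'a set" where
  "nonneg_int_comb D = {v. \<exists>k::'a \<Rightarrow> int. (\<forall>d\<in>D. k d \<ge> 0) \<and>
      v = (\<Sum>d\<in>D. of_int (k d) *\<^sub>R d)}"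

definition root_basis :: "'a::euclidean_space set \<Rightarrow> 'a set \<Rightarrow> bool" where
  "root_basis Phi Delta \<longleftrightarrow> Delta \<subseteq> Phi \<and> independent Delta \<and> span Delta = UNIV \<and>
     (\<forall>b\<in>Phi. b \<in> nonneg_int_comb Delta \<or> - b \<in> nonneg_int_comb Delta)"

definition pos_roots :: "'a::euclidean_space set \<Rightarrow> 'a set \<Rightarrow> 'a set" where
  "pos_roots Phi Delta = Phi \<inter> nonneg_int_comb Delta"

definition highest_root :: "'a::euclidean_space set \<Rightarrow> 'a set \<Rightarrow> 'a \<Rightarrow> bool" where
  "highest_root Phi Delta h \<longleftrightarrow> h \<in> Phi \<and> (\<forall>b\<in>Phi. h - b \<in> nonneg_int_comb Delta)"

definition refl_prod :: "'a::euclidean_space list \<Rightarrow> 'a \<Rightarrow> 'a" where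
  "refl_prod xs = foldr (\<lambda>a f. refl a \<circ> f) xs id"

definition weyl_group :: "'a::euclidean_space set \<Rightarrow> ('a \<Rightarrow> 'a) set" where
  "weyl_group Phi = {refl_prod xs | xs. set xs \<subseteq> Phi}"

definition weyl_length :: "'a::euclidean_space set \<Rightarrow> ('a \<Rightarrow> 'a) \<Rightarrow> nat" where
  "weyl_length Delta w = (LEAST n. \<exists>xs. length xs = n \<and> set xs \<subseteq> Delta \<and> w = refl_prod xs)"

definition long_roots :: "'a::euclidean_space set \<Rightarrow> 'a set" where
  "long_roots Phi = {a\<in>Phi. \<forall>b\<in>Phi. norm b \<le> norm a}"

definition I_tilde :: "'a::euclidean_space set \<Rightarrow> 'a \<Rightarrow> 'a set" where
  "I_tilde Delta h = {d\<in>Delta. h \<bullet> d = 0}"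

definition pos_roots_I :: "'a::euclidean_space set \<Rightarrow> 'a set \<Rightarrow> 'a set \<Rightarrow> 'a set" where
  "pos_roots_I Phi Delta I = pos_roots Phi Delta \<inter> span I"

definition X_I :: "'a::euclidean_space set \<Rightarrow> 'a set \<Rightarrow> 'a set \<Rightarrow> ('a \<Rightarrow> 'a) set" where
  "X_I Phi Delta I = {w\<in>weyl_group Phi. w ` pos_roots_I Phi Delta I \<subseteq> pos_roots Phi Delta}"

definition x_root :: "'a::euclidean_space set \<Rightarrow> 'a set \<Rightarrow> 'a \<Rightarrow> 'a \<Rightarrow> ('a \<Rightarrow> 'a)" where
  "x_root Phi Delta h a = (THE w. w \<in> X_I Phi Delta (I_tilde Delta h) \<and> w h = a)"

end

theory Submission
  imports Defs
begin


lemma refl_linear: "linear (refl a)"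
  unfolding refl_def by (auto intro!: linearI simp: algebra_simps inner_add_left add_divide_distrib scaleR_add_left)

lemma refl_inner: "a \<noteq> 0 \<Longrightarrow> refl a x \<bullet> refl a y = x \<bullet> y"
  unfolding refl_def by (simp add: algebra_simps inner_commute power2_eq_square)

lemma refl_refl[simp]: "a \<noteq> 0 \<Longrightarrow> refl a (refl a x) = x"
  unfolding refl_def by (simp add: algebra_simps inner_commute)

lemma refl_self[simp]: "a \<noteq> 0 \<Longrightarrow> refl a a = -a"
  unfolding refl_def by (simp add: algebra_simps scaleR_2)

lemma refl_orth: "x \<bullet> a = 0 \<Longrightarrow> refl a x = x"
  unfolding refl_def by simp

lemma refl_conj:
  assumes "linear v" "\<And>x y. v x \<bullet> v y = x \<bullet> y"
  shows "refl (v a) (v x) = v (refl a x)"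
  unfolding refl_def using assms by (simp add: linear_diff linear_scale)

lemma refl_prod_Nil[simp]: "refl_prod [] = id"
  by (simp add: refl_prod_def)
lemma refl_prod_Cons[simp]: "refl_prod (a#xs) = refl a \<circ> refl_prod xs"
  by (simp add: refl_prod_def)
lemma refl_prod_append: "refl_prod (xs@ys) = refl_prod xs \<circ> refl_prod ys"
  by (induction xs) auto

lemma refl_prod_linear: "linear (refl_prod xs)"
proof (induction xs)
  case Nil show ?case by (auto intro!: linearI)
next
  case (Cons a xs)
  show ?case using linear_compose[OF Cons refl_linear[of a]] by (simp add: o_def)
qed

lemma refl_prod_inner: "0 \<notin> set xs \<Longrightarrow> refl_prod xs x \<bullet> refl_prod xs y = x \<bullet> y"
  by (induction xs arbitrary: x y) (auto simp: refl_inner)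

lemma refl_prod_rev: "0 \<notin> set xs \<Longrightarrow> refl_prod xs (refl_prod (rev xs) x) = x"
  by (induction xs arbitrary: x) (auto simp: refl_prod_append)

lemma refl_prod_rev': "0 \<notin> set xs \<Longrightarrow> refl_prod (rev xs) (refl_prod xs x) = x"
  using refl_prod_rev[of "rev xs"] by simp



locale RS =
  fixes Phi Delta :: "'a::euclidean_space set"
  assumes rs: "root_system Phi" and red: "reduced_root_system Phi" and bas: "root_basis Phi Delta"
begin

definition coef :: "'a \<Rightarrow> 'a \<Rightarrow> real" where "coef v d = representation Delta v d"
definition posr :: "'a \<Rightarrow> bool" where "posr v \<longleftrightarrow> (\<forall>d\<in>Delta. 0 \<le> coef v d)"

lemma finPhi: "finite Phi" and zPhi: "0 \<notin> Phi" and reflPhi: "a \<in> Phi \<Longrightarrow> b \<in> Phi \<Longrightarrow> refl a b \<in> Phi"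
  and intPhi: "a \<in> Phi \<Longrightarrow> b \<in> Phi \<Longrightarrow> 2 * (b \<bullet> a) / (a \<bullet> a) \<in> \<int>"
  using rs unfolding root_system_def by auto

lemma DsubPhi: "Delta \<subseteq> Phi" and indep: "independent Delta" and spanD: "span Delta = UNIV"
  and posneg: "b \<in> Phi \<Longrightarrow> b \<in> nonneg_int_comb Delta \<or> - b \<in> nonneg_int_comb Delta"
  using bas unfolding root_basis_def by auto

lemma finD: "finite Delta" using DsubPhi finPhi finite_subset by blast
lemma zD: "0 \<notin> Delta" using DsubPhi zPhi by auto

lemma inspan[simp]: "v \<in> span Delta" using spanD by auto

lemma coef_diff: "coef (u - v) d = coef u d - coef v d"
  unfolding coef_def using representation_diff[OF indep] by simp
lemma coef_add: "coef (u + v) d = coef u d + coef v d"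
  unfolding coef_def using representation_add[OF indep] by simp
lemma coef_neg: "coef (- v) d = - coef v d"
  unfolding coef_def using representation_neg[OF indep] by simp
lemma coef_scale: "coef (c *\<^sub>R v) d = c * coef v d"
  unfolding coef_def using representation_scale[OF indep] by simp
lemma coef_sum: "coef (sum f A) d = (\<Sum>i\<in>A. coef (f i) d)"
  unfolding coef_def using representation_sum[OF indep, of A f] by simp
lemma coef_simple: "e \<in> Delta \<Longrightarrow> coef e d = (if d = e then 1 else 0)"
  unfolding coef_def using representation_basis[OF indep] by simp
lemma coef_out: "d \<notin> Delta \<Longrightarrow> coef v d = 0"
  unfolding coef_def using representation_ne_zero by blast
lemma expand: "v = (\<Sum>d\<in>Delta. coef v d *\<^sub>R d)"
  unfolding coef_def using sum_representation_eq[OF indep inspan finD] by simp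

lemma coef_zero: "(\<And>d. d \<in> Delta \<Longrightarrow> coef v d = 0) \<Longrightarrow> v = 0"
  by (subst expand) simp

lemma coef_eq: "(\<And>d. d \<in> Delta \<Longrightarrow> coef u d = coef v d) \<Longrightarrow> u = v"
  using coef_zero[of "u - v"] by (simp add: coef_diff)

lemma nnic_posr: "v \<in> nonneg_int_comb Delta \<Longrightarrow> posr v"
proof -
  assume "v \<in> nonneg_int_comb Delta"
  then obtain k where k: "\<forall>d\<in>Delta. k d \<ge> 0" "v = (\<Sum>d\<in>Delta. of_int (k d) *\<^sub>R d)"
    unfolding nonneg_int_comb_def by auto
  have "coef v e = of_int (k e)" if "e \<in> Delta" for e
  proof -
    have "coef v e = (\<Sum>d\<in>Delta. of_int (k d) * (if e = d then 1 else 0))"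
      using k(2) by (simp add: coef_sum coef_scale coef_simple)
    also have "\<dots> = of_int (k e)" using that finD by (simp add: if_distrib sum.delta cong: if_cong)
    finally show ?thesis .
  qed
  then show "posr v" using k(1) unfolding posr_def by auto
qed

lemma posr_add: "posr u \<Longrightarrow> posr v \<Longrightarrow> posr (u + v)"
  unfolding posr_def by (simp add: coef_add)

lemma root_dich: "b \<in> Phi \<Longrightarrow> posr b \<or> posr (- b)"
  using posneg nnic_posr by blast

lemma not_both: "posr b \<Longrightarrow> posr (- b) \<Longrightarrow> b = 0"
  unfolding posr_def by (intro coef_zero) (force simp: coef_neg)

lemma root_not_both: "b \<in> Phi \<Longrightarrow> posr b \<Longrightarrow> \<not> posr (- b)"
  using not_both zPhi by blast

lemma negPhi: "b \<in> Phi \<Longrightarrow> - b \<in> Phi"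
  using reflPhi[of b b] zPhi by (metis refl_self)

lemma pos_roots_eq: "pos_roots Phi Delta = {b\<in>Phi. posr b}"
  unfolding pos_roots_def using posneg nnic_posr root_not_both by auto

lemma simple_posr: "d \<in> Delta \<Longrightarrow> posr d"
  unfolding posr_def by (simp add: coef_simple)

lemma reflD_pos:
  assumes d: "d \<in> Delta" and b: "b \<in> Phi" "posr b" "b \<noteq> d"
  shows "posr (refl d b)"
proof -
  have "\<exists>e\<in>Delta. e \<noteq> d \<and> coef b e \<noteq> 0"
  proof (rule ccontr)
    assume "\<not> ?thesis"
    then have z: "\<And>e. e \<in> Delta \<Longrightarrow> e \<noteq> d \<Longrightarrow> coef b e = 0" by auto
    have "b = coef b d *\<^sub>R d"
      by (rule coef_eq) (use d z in \<open>auto simp: coef_scale coef_simple\<close>)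
    moreover have "d \<in> Phi" using d DsubPhi by auto
    ultimately have "coef b d = 1 \<or> coef b d = -1" using red b unfolding reduced_root_system_def by metis
    moreover have "coef b d \<ge> 0" using b d unfolding posr_def by auto
    ultimately have "b = d" using \<open>b = coef b d *\<^sub>R d\<close> by auto
    with b show False by simp
  qed
  then obtain e where e: "e \<in> Delta" "e \<noteq> d" "coef b e \<noteq> 0" by auto
  have "coef b e > 0" using e b unfolding posr_def by force
  moreover have "coef (refl d b) e = coef b e"
    unfolding refl_def using e d by (simp add: coef_diff coef_scale coef_simple)
  ultimately have "\<not> posr (- refl d b)" using e unfolding posr_def by (auto simp: coef_neg intro!: bexI[of _ e])
  moreover have "refl d b \<in> Phi" using reflPhi d b DsubPhi by auto
  ultimately show ?thesis using root_dich by blast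
qed

end


context RS begin

definition Nset :: "('a \<Rightarrow> 'a) \<Rightarrow> 'a set" where
  "Nset w = {b\<in>Phi. posr b \<and> \<not> posr (w b)}"

abbreviation L where "L w \<equiv> weyl_length Delta w"

lemma refl_prod_snoc: "refl_prod (xs @ [d]) = refl_prod xs \<circ> refl d" by (simp add: refl_prod_append)

lemma finN: "finite (Nset w)" unfolding Nset_def using finPhi by auto

lemma wPhi: "set xs \<subseteq> Phi \<Longrightarrow> b \<in> Phi \<Longrightarrow> refl_prod xs b \<in> Phi"
  by (induction xs arbitrary: b) (auto intro: reflPhi)

lemma z_notin: "set xs \<subseteq> Phi \<Longrightarrow> 0 \<notin> set xs" using zPhi by auto

lemma wlin: "linear (refl_prod xs)" by (rule refl_prod_linear)

lemma w_neg: "refl_prod xs (- v) = - refl_prod xs v"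
  by (rule linear_neg[OF refl_prod_linear])

lemma posr_comb: "(\<And>d. d \<in> Delta \<Longrightarrow> c d \<ge> 0 \<and> posr (f d)) \<Longrightarrow> posr (\<Sum>d\<in>Delta. c d *\<^sub>R f d)"
  unfolding posr_def by (auto simp: coef_sum coef_scale intro!: sum_nonneg)

lemma exists_simple_neg:
  assumes xs: "set xs \<subseteq> Phi" and "Nset (refl_prod xs) \<noteq> {}"
  shows "\<exists>d\<in>Delta. \<not> posr (refl_prod xs d)"
proof (rule ccontr)
  assume "\<not> ?thesis"
  then have all: "\<And>d. d \<in> Delta \<Longrightarrow> posr (refl_prod xs d)" by auto
  obtain b where b: "b \<in> Nset (refl_prod xs)" using assms by auto
  have "refl_prod xs b = refl_prod xs (\<Sum>d\<in>Delta. coef b d *\<^sub>R d)" by (subst expand) simp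
  also have "\<dots> = (\<Sum>d\<in>Delta. coef b d *\<^sub>R refl_prod xs d)"
    by (simp add: linear_sum[OF refl_prod_linear] linear_scale[OF refl_prod_linear])
  finally have "posr (refl_prod xs b)"
    using posr_comb[of "coef b" "refl_prod xs"] all b unfolding Nset_def posr_def by auto
  with b show False unfolding Nset_def by auto
qed

lemma N_swap:
  assumes xs: "set xs \<subseteq> Phi" and d: "d \<in> Delta"
  shows "card (Nset (refl_prod xs \<circ> refl d) - {d}) = card (Nset (refl_prod xs) - {d})"
proof -
  let ?w = "refl_prod xs"
  have dP: "d \<in> Phi" "d \<noteq> 0" using d DsubPhi zD by auto
  have "Nset (?w \<circ> refl d) - {d} = refl d ` (Nset ?w - {d})"
  proof
    show "Nset (?w \<circ> refl d) - {d} \<subseteq> refl d ` (Nset ?w - {d})"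
    proof
      fix b assume b: "b \<in> Nset (?w \<circ> refl d) - {d}"
      have bP: "b \<in> Phi" "posr b" "b \<noteq> d" using b unfolding Nset_def by auto
      have "refl d b \<noteq> d"
      proof
        assume "refl d b = d"
        then have "b = - d" using dP by (metis refl_refl refl_self)
        then show False using bP root_not_both[of d] dP simple_posr[OF d] by auto
      qed
      moreover have "refl d b \<in> Nset ?w" using b reflD_pos[OF d bP] reflPhi[OF dP(1) bP(1)]
        unfolding Nset_def by auto
      ultimately show "b \<in> refl d ` (Nset ?w - {d})"
        using dP by (auto intro!: image_eqI[of _ _ "refl d b"])
    qed
  next
    show "refl d ` (Nset ?w - {d}) \<subseteq> Nset (?w \<circ> refl d) - {d}"
    proof
      fix b assume "b \<in> refl d ` (Nset ?w - {d})"
      then obtain c where c: "c \<in> Nset ?w" "c \<noteq> d" "b = refl d c" by auto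
      have cP: "c \<in> Phi" "posr c" using c unfolding Nset_def by auto
      have "b \<noteq> d"
      proof
        assume "b = d"
        then have "c = - d" using dP c by (metis refl_refl refl_self)
        then show False using cP root_not_both[of d] dP simple_posr[OF d] by auto
      qed
      then show "b \<in> Nset (?w \<circ> refl d) - {d}"
        using c cP reflD_pos[OF d cP(1) cP(2) c(2)] reflPhi[OF dP(1) cP(1)] dP
        unfolding Nset_def by auto
    qed
  qed
  moreover have "inj_on (refl d) (Nset ?w - {d})"
    by (rule inj_onI) (metis dP(2) refl_refl)
  ultimately show ?thesis by (simp add: card_image)
qed

lemma N_up:
  assumes xs: "set xs \<subseteq> Phi" and d: "d \<in> Delta" and p: "posr (refl_prod xs d)"
  shows "card (Nset (refl_prod xs \<circ> refl d)) = Suc (card (Nset (refl_prod xs)))"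
proof -
  have dP: "d \<in> Phi" "d \<noteq> 0" using d DsubPhi zD by auto
  have "d \<notin> Nset (refl_prod xs)" using p unfolding Nset_def by auto
  moreover have "d \<in> Nset (refl_prod xs \<circ> refl d)"
    using dP simple_posr[OF d] root_not_both[OF wPhi[OF xs dP(1)] p]
    unfolding Nset_def by (simp add: w_neg)
  ultimately show ?thesis using N_swap[OF xs d] finN
    by (metis Diff_empty Diff_insert0 card_Suc_Diff1)
qed

lemma N_down:
  assumes xs: "set xs \<subseteq> Phi" and d: "d \<in> Delta" and p: "\<not> posr (refl_prod xs d)"
  shows "card (Nset (refl_prod xs)) = Suc (card (Nset (refl_prod xs \<circ> refl d)))"
proof -
  have dP: "d \<in> Phi" "d \<noteq> 0" using d DsubPhi zD by auto
  have "d \<in> Nset (refl_prod xs)" using p dP simple_posr[OF d] unfolding Nset_def by auto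
  moreover have "posr (- refl_prod xs d)" using root_dich[OF wPhi[OF xs dP(1)]] p by auto
  then have "d \<notin> Nset (refl_prod xs \<circ> refl d)"
    using dP unfolding Nset_def by (simp add: w_neg)
  ultimately show ?thesis using N_swap[OF xs d] finN
    by (metis Diff_empty Diff_insert0 card_Suc_Diff1)
qed

lemma N_le_length: "set xs \<subseteq> Delta \<Longrightarrow> card (Nset (refl_prod xs)) \<le> length xs"
proof (induction xs rule: rev_induct)
  case Nil
  have "Nset (\<lambda>a. a) = {}" unfolding Nset_def by auto
  then show ?case by simp
next
  case (snoc d xs)
  have xs: "set xs \<subseteq> Phi" "d \<in> Delta" using snoc DsubPhi by auto
  have e: "refl_prod (xs @ [d]) = refl_prod xs \<circ> refl d" by (simp add: refl_prod_append)
  have IH: "card (Nset (refl_prod xs)) \<le> length xs" using snoc by auto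
  have "card (Nset (refl_prod xs \<circ> refl d)) \<le> Suc (length xs)"
  proof (cases "posr (refl_prod xs d)")
    case True then show ?thesis using N_up[OF xs True] IH by linarith
  next
    case False then show ?thesis using N_down[OF xs False] IH by linarith
  qed
  then show ?case unfolding e by (simp only: length_append_singleton)
qed

end


context RS begin

lemma deletion:
  assumes xs: "set xs \<subseteq> Delta" and d: "d \<in> Delta" and neg: "\<not> posr (refl_prod xs d)"
  shows "\<exists>i<length xs. refl_prod (xs @ [d]) = refl_prod (take i xs @ drop (Suc i) xs)"
proof -
  define \<beta> where "\<beta> j = refl_prod (drop j xs) d" for j
  define S where "S = {j. j \<le> length xs \<and> \<not> posr (\<beta> j)}"
  have S0: "0 \<in> S" using neg unfolding S_def \<beta>_def by simp
  have finS: "finite S" unfolding S_def by (rule finite_subset[of _ "{..length xs}"]) auto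
  define i where "i = Max S"
  have iS: "i \<in> S" unfolding i_def using finS S0 Max_in by blast
  have "length xs \<notin> S" unfolding S_def \<beta>_def using simple_posr[OF d] by simp
  then have ilt: "i < length xs" using iS unfolding S_def by (metis (mono_tags) le_neq_implies_less mem_Collect_eq)
  have "Suc i \<notin> S" using Max_ge[OF finS, of "Suc i"] unfolding i_def[symmetric] by auto
  then have possi: "posr (\<beta> (Suc i))" using ilt unfolding S_def by auto
  define e where "e = xs ! i"
  have eD: "e \<in> Delta" using xs ilt unfolding e_def by auto
  have dropi: "drop i xs = e # drop (Suc i) xs" unfolding e_def using ilt by (simp add: Cons_nth_drop_Suc)
  have bi: "\<beta> i = refl e (\<beta> (Suc i))" unfolding \<beta>_def dropi by simp
  have setdr: "set (drop (Suc i) xs) \<subseteq> Phi" using xs DsubPhi set_drop_subset by fastforce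
  have bP: "\<beta> (Suc i) \<in> Phi" unfolding \<beta>_def using wPhi[OF setdr] d DsubPhi by auto
  have "\<not> posr (\<beta> i)" using iS unfolding S_def by auto
  then have be: "\<beta> (Suc i) = e" using reflD_pos[OF eD bP possi] bi by auto
  define v where "v = refl_prod (drop (Suc i) xs)"
  have vd: "v d = e" using be unfolding v_def \<beta>_def by simp
  have vl: "linear v" unfolding v_def by (rule refl_prod_linear)
  have vi: "\<And>x y. v x \<bullet> v y = x \<bullet> y" unfolding v_def using refl_prod_inner[OF z_notin[OF setdr]] by blast
  have conj: "v (refl d x) = refl e (v x)" for x
    using refl_conj[OF vl vi, of d x] vd by simp
  have e0: "e \<noteq> 0" using eD zD by auto
  have xsplit: "xs = take i xs @ e # drop (Suc i) xs" using dropi by (metis append_take_drop_id)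
  have "refl_prod (xs @ [d]) = refl_prod (take i xs @ drop (Suc i) xs)"
  proof
    fix x
    have "refl_prod (xs @ [d]) x = refl_prod (take i xs) (refl e (v (refl d x)))"
      by (subst xsplit) (simp add: refl_prod_append v_def)
    also have "\<dots> = refl_prod (take i xs) (v x)" by (simp add: conj e0)
    also have "\<dots> = refl_prod (take i xs @ drop (Suc i) xs) x" by (simp add: refl_prod_append v_def)
    finally show "refl_prod (xs @ [d]) x = refl_prod (take i xs @ drop (Suc i) xs) x" .
  qed
  then show ?thesis using ilt by blast
qed

lemma minword: "set xs \<subseteq> Delta \<Longrightarrow>
  \<exists>ys. length ys = L (refl_prod xs) \<and> set ys \<subseteq> Delta \<and> refl_prod xs = refl_prod ys"
  unfolding weyl_length_def
  by (rule LeastI_ex[where P = "\<lambda>n. \<exists>ys. length ys = n \<and> set ys \<subseteq> Delta \<and> refl_prod xs = refl_prod ys"]) blast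

lemma L_le: "set xs \<subseteq> Delta \<Longrightarrow> w = refl_prod xs \<Longrightarrow> L w \<le> length xs"
  unfolding weyl_length_def by (rule Least_le) blast

lemma minword_last:
  assumes ys: "set ys \<subseteq> Delta" "length ys = L (refl_prod ys)" "ys = zs @ [d]"
  shows "\<not> posr (refl_prod ys d)"
proof
  assume p: "posr (refl_prod ys d)"
  have zs: "set zs \<subseteq> Delta" "d \<in> Delta" using ys by auto
  have d0: "d \<noteq> 0" "d \<in> Phi" using zs zD DsubPhi by auto
  have "refl_prod ys d = - refl_prod zs d" using ys(3) d0 by (simp add: refl_prod_append w_neg)
  then have "posr (- refl_prod zs d)" using p by simp
  moreover have "refl_prod zs d \<in> Phi" using wPhi[of zs d] zs d0 DsubPhi by auto
  ultimately have "\<not> posr (refl_prod zs d)" using root_not_both[OF negPhi] by fastforce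
  from deletion[OF zs this] obtain i where i: "i < length zs"
    "refl_prod ys = refl_prod (take i zs @ drop (Suc i) zs)" using ys(3) by auto
  have "set (take i zs @ drop (Suc i) zs) \<subseteq> Delta" using zs set_take_subset set_drop_subset by fastforce
  from L_le[OF this i(2)] i(1) ys(2,3) show False by simp
qed

lemma lemmaA:
  assumes xs: "set xs \<subseteq> Delta" and N: "Nset (refl_prod xs) = {}"
  shows "refl_prod xs = id"
proof -
  obtain ys where ys: "length ys = L (refl_prod xs)" "set ys \<subseteq> Delta" "refl_prod xs = refl_prod ys"
    using minword[OF xs] by auto
  show ?thesis
  proof (cases ys rule: rev_cases)
    case Nil then show ?thesis using ys by simp
  next
    case (snoc zs d)
    have "\<not> posr (refl_prod ys d)" using minword_last[OF ys(2) _ snoc] ys by simp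
    moreover have "d \<in> Phi" "posr d" using snoc ys DsubPhi simple_posr by auto
    ultimately have "d \<in> Nset (refl_prod xs)" unfolding Nset_def using ys by auto
    with N show ?thesis by auto
  qed
qed

lemma L_N: "set xs \<subseteq> Delta \<Longrightarrow> L (refl_prod xs) = card (Nset (refl_prod xs))"
proof -
  have ge: "card (Nset (refl_prod xs)) \<le> L (refl_prod xs)" if xsD: "set xs \<subseteq> Delta" for xs
  proof -
    obtain ys where ys: "length ys = L (refl_prod xs)" "set ys \<subseteq> Delta" "refl_prod xs = refl_prod ys"
      using minword[OF xsD] by auto
    show ?thesis using N_le_length[OF ys(2)] ys by simp
  qed
  have le: "\<And>xs. set xs \<subseteq> Delta \<Longrightarrow> card (Nset (refl_prod xs)) = n \<Longrightarrow> L (refl_prod xs) \<le> n" for n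
  proof (induction n)
    case 0
    then have "refl_prod xs = id" using lemmaA finN by auto
    then have "refl_prod xs = refl_prod []" by simp
    have "L (refl_prod xs) \<le> length ([]::'a list)"
      by (rule L_le[of "[]" "refl_prod xs"]) (simp_all only: \<open>refl_prod xs = refl_prod []\<close> list.set(1) empty_subsetI)
    then show ?case by simp
  next
    case (Suc n)
    have xsP: "set xs \<subseteq> Phi" using Suc DsubPhi by auto
    obtain d where d: "d \<in> Delta" "\<not> posr (refl_prod xs d)"
      using exists_simple_neg[OF xsP] Suc by fastforce
    have c: "card (Nset (refl_prod (xs @ [d]))) = n"
      using N_down[OF xsP d] Suc(3) by (simp add: refl_prod_snoc)
    have "L (refl_prod (xs @ [d])) \<le> n" using Suc.IH[OF _ c] Suc(2) d by auto
    moreover obtain ys where ys: "length ys = L (refl_prod (xs @ [d]))" "set ys \<subseteq> Delta"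
      "refl_prod (xs @ [d]) = refl_prod ys" using minword[of "xs @ [d]"] Suc(2) d by auto
    moreover have "refl_prod xs = refl_prod (ys @ [d])"
    proof -
      have d0: "d \<noteq> 0" using d zD by auto
      have "refl_prod (ys @ [d]) = refl_prod (xs @ [d]) \<circ> refl d" using ys(3) by (simp add: refl_prod_snoc)
      also have "\<dots> = refl_prod xs" by (rule ext) (simp add: refl_prod_snoc d0)
      finally show ?thesis by simp
    qed
    ultimately show ?case using L_le[of "ys @ [d]" "refl_prod xs"] d by fastforce
  qed
  show "set xs \<subseteq> Delta \<Longrightarrow> ?thesis" using ge le[OF _ refl] by (simp add: le_antisym)
qed

end


context RS begin

definition ht :: "'a \<Rightarrow> real" where "ht v = (\<Sum>d\<in>Delta. coef v d)"

lemma ht_diff: "ht (u - v) = ht u - ht v" unfolding ht_def by (simp add: coef_diff sum_subtractf)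
lemma ht_scale: "ht (c *\<^sub>R v) = c * ht v" unfolding ht_def by (simp add: coef_scale sum_distrib_left)
lemma ht_simple: "d \<in> Delta \<Longrightarrow> ht d = 1" unfolding ht_def using finD by (simp add: coef_simple)

lemma ht_refl: "d \<in> Delta \<Longrightarrow> ht (refl d b) = ht b - 2 * (b \<bullet> d) / (d \<bullet> d)"
  unfolding refl_def by (simp add: ht_diff ht_scale ht_simple)

lemma exists_pos_inner:
  assumes b: "b \<in> Phi" "posr b"
  shows "\<exists>d\<in>Delta. b \<bullet> d > 0"
proof (rule ccontr)
  assume "\<not> ?thesis"
  then have le: "\<And>d. d \<in> Delta \<Longrightarrow> b \<bullet> d \<le> 0" by (simp add: not_less)
  have "b \<bullet> b = b \<bullet> (\<Sum>d\<in>Delta. coef b d *\<^sub>R d)" by (subst (2) expand) simp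
  also have "\<dots> = (\<Sum>d\<in>Delta. coef b d * (b \<bullet> d))" by (simp add: inner_sum_right)
  also have "\<dots> \<le> 0"
    using b le unfolding posr_def by (intro sum_nonpos) (simp add: mult_nonneg_nonpos)
  finally have "b = 0" using inner_gt_zero_iff[of b] by linarith
  with b zPhi show False by simp
qed

lemma conj_simple_pos:
  "b \<in> Phi \<Longrightarrow> posr b \<Longrightarrow> \<exists>ys e. set ys \<subseteq> Delta \<and> e \<in> Delta \<and> b = refl_prod ys e"
proof (induction "card {c\<in>Phi. ht c < ht b}" arbitrary: b rule: less_induct)
  case less
  show ?case
  proof (cases "b \<in> Delta")
    case True then show ?thesis by (intro exI[of _ "[]"] exI[of _ b]) simp
  next
    case False
    obtain d where d: "d \<in> Delta" "b \<bullet> d > 0" using exists_pos_inner[OF less(2,3)] by auto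
    have dP: "d \<in> Phi" "d \<noteq> 0" using d DsubPhi zD by auto
    define c where "c = refl d b"
    have cP: "c \<in> Phi" "posr c" unfolding c_def using reflPhi[OF dP(1) less(2)] reflD_pos[OF d(1) less(2,3)] False d
      by auto
    have "d \<bullet> d > 0" using dP by simp
    then have "2 * (b \<bullet> d) / (d \<bullet> d) > 0" using d by simp
    then have htc: "ht c < ht b" unfolding c_def using ht_refl[OF d(1)] by simp
    have "{x\<in>Phi. ht x < ht c} \<subset> {x\<in>Phi. ht x < ht b}" using htc cP by auto
    then have "card {x\<in>Phi. ht x < ht c} < card {x\<in>Phi. ht x < ht b}"
      using finPhi by (intro psubset_card_mono) auto
    from less(1)[OF this cP] obtain ys e where ys: "set ys \<subseteq> Delta" "e \<in> Delta" "c = refl_prod ys e" by auto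
    have "b = refl_prod (d # ys) e" using ys dP unfolding c_def by (metis comp_apply refl_prod_Cons refl_refl)
    then show ?thesis using ys d by (intro exI[of _ "d # ys"] exI[of _ e]) auto
  qed
qed

lemma conj_simple:
  assumes b: "b \<in> Phi" shows "\<exists>ys e. set ys \<subseteq> Delta \<and> e \<in> Delta \<and> b = refl_prod ys e"
proof (cases "posr b")
  case True then show ?thesis using conj_simple_pos b by auto
next
  case False
  then have "posr (- b)" using root_dich b by auto
  then obtain ys e where ys: "set ys \<subseteq> Delta" "e \<in> Delta" "- b = refl_prod ys e"
    using conj_simple_pos negPhi b by blast
  have e0: "e \<noteq> 0" using ys zD by auto
  have "b = refl_prod (ys @ [e]) e" using ys(3) e0
    by (simp add: refl_prod_snoc w_neg) (metis minus_minus)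
  then show ?thesis using ys by (intro exI[of _ "ys @ [e]"] exI[of _ e]) auto
qed

lemma refl_gen: assumes b: "b \<in> Phi" shows "\<exists>zs. set zs \<subseteq> Delta \<and> refl b = refl_prod zs"
proof -
  obtain ys e where ys: "set ys \<subseteq> Delta" "e \<in> Delta" "b = refl_prod ys e" using conj_simple[OF b] by auto
  have ysP: "0 \<notin> set ys" using ys zD by auto
  have "refl b = refl_prod (ys @ [e] @ rev ys)"
  proof
    fix y
    have "refl b y = refl (refl_prod ys e) (refl_prod ys (refl_prod (rev ys) y))"
      using ys(3) refl_prod_rev[OF ysP] by simp
    also have "\<dots> = refl_prod ys (refl e (refl_prod (rev ys) y))"
      by (rule refl_conj[OF refl_prod_linear refl_prod_inner[OF ysP]])
    also have "\<dots> = refl_prod (ys @ [e] @ rev ys) y" by (simp add: refl_prod_append)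
    finally show "refl b y = refl_prod (ys @ [e] @ rev ys) y" .
  qed
  then show ?thesis using ys by (intro exI[of _ "ys @ [e] @ rev ys"]) auto
qed

lemma weyl_gen: "set xs \<subseteq> Phi \<Longrightarrow> \<exists>ys. set ys \<subseteq> Delta \<and> refl_prod xs = refl_prod ys"
proof (induction xs)
  case Nil then show ?case by (intro exI[of _ "[]"]) simp
next
  case (Cons a xs)
  obtain ys where ys: "set ys \<subseteq> Delta" "refl_prod xs = refl_prod ys" using Cons by auto
  obtain zs where zs: "set zs \<subseteq> Delta" "refl a = refl_prod zs" using refl_gen[of a] Cons.prems by auto
  show ?case using ys zs by (intro exI[of _ "zs @ ys"]) (simp add: refl_prod_append)
qed

lemma weyl_group_gen: "w \<in> weyl_group Phi \<Longrightarrow> \<exists>ys. set ys \<subseteq> Delta \<and> w = refl_prod ys"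
  unfolding weyl_group_def using weyl_gen by auto

end


locale RSH = RS +
  fixes h assumes hr: "highest_root Phi Delta h"
begin

abbreviation "It \<equiv> I_tilde Delta h"

lemma hP: "h \<in> Phi" and hhi: "b \<in> Phi \<Longrightarrow> posr (h - b)"
  using hr nnic_posr unfolding highest_root_def by auto

lemma h0: "h \<noteq> 0" using hP zPhi by auto

lemma h_pos: "posr h"
proof -
  have "posr (h - - h)" using hhi negPhi hP by blast
  then show ?thesis unfolding posr_def by (auto simp: coef_add)
qed

lemma dom_pos: "(\<And>d. d \<in> Delta \<Longrightarrow> m \<bullet> d \<ge> 0) \<Longrightarrow> posr v \<Longrightarrow> m \<bullet> v \<ge> 0"
proof -
  assume dm: "\<And>d. d \<in> Delta \<Longrightarrow> m \<bullet> d \<ge> 0" and v: "posr v"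
  have "m \<bullet> v = m \<bullet> (\<Sum>d\<in>Delta. coef v d *\<^sub>R d)" by (subst expand) simp
  also have "\<dots> = (\<Sum>d\<in>Delta. coef v d * (m \<bullet> d))" by (simp add: inner_sum_right)
  also have "\<dots> \<ge> 0" using dm v unfolding posr_def by (intro sum_nonneg) simp
  finally show ?thesis .
qed

lemma h_dom: "d \<in> Delta \<Longrightarrow> h \<bullet> d \<ge> 0"
proof -
  assume d: "d \<in> Delta"
  have dP: "d \<in> Phi" "d \<noteq> 0" using d DsubPhi zD by auto
  have "posr (h - refl d h)" using hhi reflPhi[OF dP(1) hP] by auto
  then have "0 \<le> coef (h - refl d h) d" using d unfolding posr_def by auto
  also have "coef (h - refl d h) d = 2 * (h \<bullet> d) / (d \<bullet> d)"
    unfolding refl_def using d by (simp add: coef_diff coef_scale coef_simple)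
  finally have "0 \<le> 2 * (h \<bullet> d) / (d \<bullet> d)" .
  moreover have "d \<bullet> d > 0" using dP by simp
  ultimately show ?thesis by (simp add: zero_le_divide_iff)
qed

lemma h_posdot: "posr v \<Longrightarrow> h \<bullet> v \<ge> 0" using dom_pos h_dom by blast

lemma span_It_orth: "v \<in> span It \<Longrightarrow> h \<bullet> v = 0"
proof -
  assume "v \<in> span It"
  moreover have "It \<subseteq> {x. h \<bullet> x = 0}" unfolding I_tilde_def by auto
  ultimately have "v \<in> {x. h \<bullet> x = 0}"
    using span_minimal[OF _ subspace_hyperplane[of h]] by blast
  then show ?thesis by simp
qed

lemma orth_support:
  assumes v: "posr v" "h \<bullet> v = 0" shows "v \<in> span It"
proof -
  have "h \<bullet> v = (\<Sum>d\<in>Delta. coef v d * (h \<bullet> d))"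
    by (subst expand) (simp add: inner_sum_right)
  then have "(\<Sum>d\<in>Delta. coef v d * (h \<bullet> d)) = 0" using v by simp
  moreover have "\<forall>d\<in>Delta. 0 \<le> coef v d * (h \<bullet> d)" using v h_dom unfolding posr_def by auto
  ultimately have z0: "\<forall>d\<in>Delta. coef v d * (h \<bullet> d) = 0"
    using sum_nonneg_eq_0_iff[OF finD, of "\<lambda>d. coef v d * (h \<bullet> d)"] by simp
  then have z: "\<And>d. d \<in> Delta \<Longrightarrow> coef v d * (h \<bullet> d) = 0" by blast
  have "(\<Sum>d\<in>Delta. coef v d *\<^sub>R d) \<in> span It"
  proof (rule span_sum)
    fix d assume d: "d \<in> Delta"
    show "coef v d *\<^sub>R d \<in> span It"
    proof (cases "coef v d = 0")
      case True then show ?thesis by (simp add: span_zero)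
    next
      case False
      then have "d \<in> It" using z[OF d] d unfolding I_tilde_def by auto
      then show ?thesis by (intro span_scale span_base)
    qed
  qed
  then show ?thesis by (subst expand)
qed

lemma refl_h_neg:
  assumes g: "g \<in> Phi" "posr g" "h \<bullet> g > 0" shows "\<not> posr (refl h g)"
proof -
  define m where "m = 2 * (g \<bullet> h) / (h \<bullet> h)"
  have "m \<in> \<int>" unfolding m_def using intPhi[OF hP g(1)] .
  moreover have "m > 0" unfolding m_def using g(3) h0 by (simp add: inner_commute divide_pos_pos)
  ultimately have m1: "m \<ge> 1"
  proof -
    assume "m \<in> \<int>" "m > 0"
    obtain k where k: "m = of_int k" using \<open>m \<in> \<int>\<close> by (rule Ints_cases)
    then have "k > 0" using \<open>m > 0\<close> by simp
    then show ?thesis using k by simp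
  qed
  have "posr (- refl h g)" unfolding posr_def
  proof
    fix d assume d: "d \<in> Delta"
    have "coef (- refl h g) d = (coef h d - coef g d) + (m - 1) * coef h d"
      unfolding refl_def m_def[symmetric] by (simp add: coef_diff coef_scale coef_neg algebra_simps)
    moreover have "coef h d - coef g d \<ge> 0" using hhi[OF g(1)] d unfolding posr_def by (auto simp: coef_diff)
    moreover have "coef h d \<ge> 0" using h_pos d unfolding posr_def by auto
    moreover have "(m - 1) * coef h d \<ge> 0" using m1 \<open>coef h d \<ge> 0\<close> by (simp add: mult_nonneg_nonneg)
    ultimately show "0 \<le> coef (- refl h g) d" by linarith
  qed
  moreover have "refl h g \<in> Phi" using reflPhi[OF hP g(1)] .
  ultimately show ?thesis using root_not_both[OF negPhi[of "refl h g"]] by simp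
qed

lemma posI_eq: "pos_roots_I Phi Delta It = {b\<in>Phi. posr b \<and> b \<in> span It}"
  unfolding pos_roots_I_def pos_roots_eq by (simp add: Int_def)

lemma wPhiD: "set xs \<subseteq> Delta \<Longrightarrow> b \<in> Phi \<Longrightarrow> refl_prod xs b \<in> Phi"
proof -
  assume a: "set xs \<subseteq> Delta" "b \<in> Phi"
  have "set xs \<subseteq> Phi" using a(1) DsubPhi by (rule order_trans)
  then show ?thesis using wPhi a(2) by blast
qed

end


context RSH begin

lemma w_inner: "set xs \<subseteq> Delta \<Longrightarrow> refl_prod xs x \<bullet> refl_prod xs y = x \<bullet> y"
  using refl_prod_inner zD by blast

lemma exists_dominant:
  assumes a: "a \<in> Phi"
  shows "\<exists>ys. set ys \<subseteq> Delta \<and> (\<forall>d\<in>Delta. refl_prod ys a \<bullet> d \<ge> 0)"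
proof -
  define Orb where "Orb = {refl_prod ys a | ys. set ys \<subseteq> Delta}"
  have OrbP: "Orb \<subseteq> Phi" unfolding Orb_def using wPhiD a by auto
  have finOrb: "finite Orb" using finite_subset[OF OrbP finPhi] .
  have aOrb: "a \<in> Orb" unfolding Orb_def by (auto intro!: exI[of _ "[]"])
  define M where "M = Max (ht ` Orb)"
  have "M \<in> ht ` Orb" unfolding M_def using finOrb aOrb by (intro Max_in) auto
  then obtain mu where mu: "mu \<in> Orb" "ht mu = M" by auto
  have le: "\<And>v. v \<in> Orb \<Longrightarrow> ht v \<le> M" unfolding M_def using finOrb by (intro Max_ge) auto
  obtain ys where ys: "set ys \<subseteq> Delta" "mu = refl_prod ys a" using mu unfolding Orb_def by auto
  have "mu \<bullet> d \<ge> 0" if d: "d \<in> Delta" for d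
  proof -
    have "refl d mu \<in> Orb" unfolding Orb_def using ys d by (auto intro!: exI[of _ "d # ys"])
    then have "ht (refl d mu) \<le> ht mu" using le mu by auto
    then have "2 * (mu \<bullet> d) / (d \<bullet> d) \<ge> 0" using ht_refl[OF d] by simp
    moreover have "d \<bullet> d > 0" using d zD by auto
    ultimately show ?thesis by (simp add: zero_le_divide_iff)
  qed
  then show ?thesis using ys by auto
qed

lemma dominant_long_is_h:
  assumes mu: "mu \<in> Phi" "\<And>d. d \<in> Delta \<Longrightarrow> mu \<bullet> d \<ge> 0" and long: "h \<bullet> h \<le> mu \<bullet> mu"
  shows "mu = h"
proof -
  have p: "posr (h - mu)" using hhi mu(1) .
  have 1: "(h - mu) \<bullet> h \<ge> 0" using dom_pos[OF h_dom p] by (simp add: inner_commute)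
  have 2: "(h - mu) \<bullet> mu \<ge> 0" using dom_pos[OF mu(2) p] by (simp add: inner_commute)
  have "(h - mu) \<bullet> h + (h - mu) \<bullet> mu = h \<bullet> h - mu \<bullet> mu"
    by (simp add: inner_diff_left inner_diff_right inner_commute[of mu h])
  then have e1: "(h - mu) \<bullet> h = 0" "(h - mu) \<bullet> mu = 0" using 1 2 long by linarith+
  have "(h - mu) \<bullet> (h - mu) = (h - mu) \<bullet> h - (h - mu) \<bullet> mu" by (simp add: inner_diff_right)
  then have "(h - mu) \<bullet> (h - mu) = 0" using e1 by simp
  then show ?thesis by simp
qed

lemma conj_to_h:
  assumes a: "a \<in> Phi" "a \<in> long_roots Phi"
  shows "\<exists>ys. set ys \<subseteq> Delta \<and> refl_prod ys h = a"
proof -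
  obtain ys where ys: "set ys \<subseteq> Delta" "\<forall>d\<in>Delta. refl_prod ys a \<bullet> d \<ge> 0"
    using exists_dominant[OF a(1)] by auto
  have "norm h \<le> norm a" using a hP unfolding long_roots_def by auto
  then have "h \<bullet> h \<le> a \<bullet> a" by (metis norm_ge_zero norm_eq_sqrt_inner real_sqrt_le_iff)
  also have "a \<bullet> a = refl_prod ys a \<bullet> refl_prod ys a" using w_inner[OF ys(1)] by simp
  finally have "refl_prod ys a = h"
    using dominant_long_is_h[of "refl_prod ys a"] wPhiD[OF ys(1) a(1)] ys(2) by blast
  then have "refl_prod (rev ys) h = a" using refl_prod_rev' zD ys(1) by blast
  then show ?thesis using ys by (intro exI[of _ "rev ys"]) auto
qed

lemma Xmem:
  assumes xs: "set xs \<subseteq> Delta" and np: "\<And>d. d \<in> Delta \<Longrightarrow> h \<bullet> d = 0 \<Longrightarrow> posr (refl_prod xs d)"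
  shows "refl_prod xs \<in> X_I Phi Delta It"
proof -
  have "refl_prod xs \<in> weyl_group Phi" unfolding weyl_group_def using xs DsubPhi by auto
  moreover have "refl_prod xs b \<in> pos_roots Phi Delta" if b: "b \<in> pos_roots_I Phi Delta It" for b
  proof -
    have bP: "b \<in> Phi" "posr b" "b \<in> span It" using b posI_eq by auto
    have hb: "h \<bullet> b = 0" using span_It_orth bP by auto
    have "h \<bullet> b = (\<Sum>d\<in>Delta. coef b d * (h \<bullet> d))"
      by (subst expand) (simp add: inner_sum_right)
    moreover have "\<forall>d\<in>Delta. 0 \<le> coef b d * (h \<bullet> d)" using bP h_dom unfolding posr_def by auto
    ultimately have z0: "\<forall>d\<in>Delta. coef b d * (h \<bullet> d) = 0"
      using hb sum_nonneg_eq_0_iff[OF finD, of "\<lambda>d. coef b d * (h \<bullet> d)"] by simp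
    have "refl_prod xs b = refl_prod xs (\<Sum>d\<in>Delta. coef b d *\<^sub>R d)" by (subst expand) simp
    also have "\<dots> = (\<Sum>d\<in>Delta. coef b d *\<^sub>R refl_prod xs d)"
      by (simp add: linear_sum[OF refl_prod_linear] linear_scale[OF refl_prod_linear])
    finally have eq: "refl_prod xs b = (\<Sum>d\<in>Delta. coef b d *\<^sub>R refl_prod xs d)" .
    have "posr (refl_prod xs b)" unfolding posr_def
    proof
      fix e assume e: "e \<in> Delta"
      have "coef (refl_prod xs b) e = (\<Sum>d\<in>Delta. coef b d * coef (refl_prod xs d) e)"
        unfolding eq by (simp add: coef_sum coef_scale)
      also have "\<dots> \<ge> 0"
      proof (rule sum_nonneg)
        fix d assume d: "d \<in> Delta"
        show "0 \<le> coef b d * coef (refl_prod xs d) e"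
        proof (cases "coef b d = 0")
          case True then show ?thesis by simp
        next
          case False
          then have "h \<bullet> d = 0" using z0 d by auto
          then have "posr (refl_prod xs d)" using np d by auto
          then show ?thesis using bP d e unfolding posr_def by simp
        qed
      qed
      finally show "0 \<le> coef (refl_prod xs b) e" .
    qed
    then show ?thesis unfolding pos_roots_eq using wPhiD[OF xs bP(1)] by auto
  qed
  ultimately show ?thesis unfolding X_I_def by auto
qed

lemma X_exists:
  assumes a: "a \<in> Phi" "a \<in> long_roots Phi"
  shows "\<exists>w. w \<in> X_I Phi Delta It \<and> w h = a"
proof -
  obtain ys where ys: "set ys \<subseteq> Delta" "refl_prod ys h = a" using conj_to_h[OF a] by auto
  let ?P = "\<lambda>zs. set zs \<subseteq> Delta \<and> refl_prod zs h = a"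
  obtain zs where zs: "?P zs" "\<And>y. ?P y \<Longrightarrow> card (Nset (refl_prod zs)) \<le> card (Nset (refl_prod y))"
    using ex_has_least_nat[of ?P ys "\<lambda>zs. card (Nset (refl_prod zs))"] ys by blast
  have "posr (refl_prod zs d)" if d: "d \<in> Delta" "h \<bullet> d = 0" for d
  proof (rule ccontr)
    assume n: "\<not> posr (refl_prod zs d)"
    have zsP: "set zs \<subseteq> Phi" using zs DsubPhi by auto
    have "refl d h = h" using refl_orth[OF d(2)] .
    then have "?P (zs @ [d])" using zs d by (simp add: refl_prod_snoc)
    then have "card (Nset (refl_prod zs)) \<le> card (Nset (refl_prod (zs @ [d])))" using zs(2) by blast
    moreover have "card (Nset (refl_prod zs)) = Suc (card (Nset (refl_prod (zs @ [d]))))"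
      using N_down[OF zsP d(1) n] by (simp only: refl_prod_snoc)
    ultimately show False by simp
  qed
  then have "refl_prod zs \<in> X_I Phi Delta It" using Xmem zs by blast
  then show ?thesis using zs by blast
qed

lemma X_unique:
  assumes w1: "w1 \<in> X_I Phi Delta It" "w1 h = a" and w2: "w2 \<in> X_I Phi Delta It" "w2 h = a"
  shows "w1 = w2"
proof -
  have "w1 \<in> weyl_group Phi" "w2 \<in> weyl_group Phi" using w1 w2 unfolding X_I_def by auto
  then obtain ys1 ys2 where y1: "set ys1 \<subseteq> Delta" "w1 = refl_prod ys1"
    and y2: "set ys2 \<subseteq> Delta" "w2 = refl_prod ys2"
    using weyl_group_gen by meson
  have z1: "0 \<notin> set ys1" using y1 zD by auto
  define us where "us = rev ys1 @ ys2"
  have us: "set us \<subseteq> Delta" unfolding us_def using y1 y2 by auto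
  have uh: "refl_prod us h = h"
  proof -
    have "refl_prod us h = refl_prod (rev ys1) (w2 h)" unfolding us_def y2(2) by (simp add: refl_prod_append)
    also have "\<dots> = refl_prod (rev ys1) (w1 h)" using w1 w2 by simp
    also have "\<dots> = h" unfolding y1(2) by (rule refl_prod_rev'[OF z1])
    finally show ?thesis .
  qed
  have w2eq: "w2 x = w1 (refl_prod us x)" for x
    unfolding us_def using y1 y2 refl_prod_rev[OF z1] by (simp add: refl_prod_append)
  have usP: "set us \<subseteq> Phi" using us DsubPhi by auto
  have "Nset (refl_prod us) = {}"
  proof (rule ccontr)
    assume "Nset (refl_prod us) \<noteq> {}"
    then obtain d where d: "d \<in> Delta" "\<not> posr (refl_prod us d)" using exists_simple_neg[OF usP] by auto
    have dP: "d \<in> Phi" "posr d" using d DsubPhi simple_posr by auto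
    have udP: "refl_prod us d \<in> Phi" using wPhiD[OF us dP(1)] .
    have nud: "posr (- refl_prod us d)" "- refl_prod us d \<in> Phi" using root_dich[OF udP] d negPhi[OF udP] by auto
    have "h \<bullet> refl_prod us d = h \<bullet> d" using w_inner[OF us, of h d] uh by simp
    moreover have "h \<bullet> (- refl_prod us d) \<ge> 0" using h_posdot nud by blast
    moreover have "h \<bullet> d \<ge> 0" using h_dom d by auto
    ultimately have hd: "h \<bullet> d = 0" "h \<bullet> (- refl_prod us d) = 0" by (auto simp: inner_minus_right)
    have "d \<in> pos_roots_I Phi Delta It"
      unfolding posI_eq using dP hd d by (auto intro!: span_base simp: I_tilde_def)
    then have "posr (w2 d)" using w2 unfolding X_I_def pos_roots_eq by auto
    moreover have "- refl_prod us d \<in> pos_roots_I Phi Delta It"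
      unfolding posI_eq using nud hd orth_support by auto
    then have "posr (w1 (- refl_prod us d))" using w1 unfolding X_I_def pos_roots_eq by auto
    then have "posr (- w2 d)" unfolding w2eq using y1 by (simp add: w_neg)
    moreover have "w2 d \<in> Phi" using y2 wPhiD dP by auto
    ultimately show False using root_not_both by blast
  qed
  then have "refl_prod us = id" using lemmaA[OF us] by simp
  then show ?thesis using w2eq by (auto simp: fun_eq_iff)
qed

lemma x_root_X:
  assumes a: "a \<in> Phi" "a \<in> long_roots Phi"
  shows "x_root Phi Delta h a \<in> X_I Phi Delta It \<and> x_root Phi Delta h a h = a"
proof -
  obtain w where w: "w \<in> X_I Phi Delta It \<and> w h = a" using X_exists[OF a] by auto
  have "\<exists>!w. w \<in> X_I Phi Delta It \<and> w h = a"
    by (rule ex1I[of _ w]) (use w X_unique in blast)+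
  from theI'[OF this] show ?thesis unfolding x_root_def .
qed

end


context RSH begin

lemma main:
  assumes a: "a \<in> pos_roots Phi Delta" "a \<in> long_roots Phi"
  shows "int (L (x_root Phi Delta h a \<circ> refl h)) = int (L (refl h)) - int (L (x_root Phi Delta h a))"
proof -
  define x where "x = x_root Phi Delta h a"
  have aP: "a \<in> Phi" using a unfolding pos_roots_def by auto
  have xX: "x \<in> X_I Phi Delta It" using x_root_X[OF aP a(2)] unfolding x_def by auto
  then have "x \<in> weyl_group Phi" unfolding X_I_def by auto
  then obtain xs where xs: "set xs \<subseteq> Delta" "x = refl_prod xs" using weyl_group_gen by blast
  obtain hs where hs: "set hs \<subseteq> Delta" "refl h = refl_prod hs" using refl_gen[OF hP] by auto
  have xsh: "x \<circ> refl h = refl_prod (xs @ hs)" using xs hs by (simp add: refl_prod_append)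
  have xshD: "set (xs @ hs) \<subseteq> Delta" using xs hs by auto
  define s where "s = refl h"
  have s_neg: "s (- v) = - s v" for v unfolding s_def by (rule linear_neg[OF refl_linear])
  have sPhi: "v \<in> Phi \<Longrightarrow> s v \<in> Phi" for v unfolding s_def using reflPhi hP by blast
  have ss: "s (s v) = v" for v unfolding s_def using h0 by simp
  have xPhi: "v \<in> Phi \<Longrightarrow> x v \<in> Phi" for v using xs wPhiD by blast
  have x_neg: "x (- v) = - x v" for v using xs by (simp add: w_neg)
  have Xpos: "posr (x b)" if b: "b \<in> Phi" "posr b" "h \<bullet> b = 0" for b
  proof -
    have "b \<in> pos_roots_I Phi Delta It" unfolding posI_eq using b orth_support by auto
    then show ?thesis using xX unfolding X_I_def pos_roots_eq by auto
  qed
  have nb: "\<not> posr v \<Longrightarrow> v \<in> Phi \<Longrightarrow> posr (- v)" for v using root_dich by blast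
  have nb2: "posr v \<Longrightarrow> v \<in> Phi \<Longrightarrow> \<not> posr (- v)" for v using root_not_both by blast
  have sub: "Nset (x \<circ> s) \<subseteq> Nset s"
  proof
    fix b assume b: "b \<in> Nset (x \<circ> s)"
    have bP: "b \<in> Phi" "posr b" "\<not> posr (x (s b))" using b unfolding Nset_def by auto
    show "b \<in> Nset s"
    proof (rule ccontr)
      assume "b \<notin> Nset s"
      then have g: "posr (s b)" "s b \<in> Phi" using bP sPhi unfolding Nset_def by auto
      have "\<not> h \<bullet> s b > 0" using refl_h_neg[OF g(2) g(1)] ss bP unfolding s_def by auto
      then have "h \<bullet> s b = 0" using h_posdot[OF g(1)] by simp
      then show False using Xpos[OF g(2) g(1)] bP by simp
    qed
  qed
  define g where "g v = - s v" for v
  have inj: "inj_on g A" for A unfolding g_def by (rule inj_onI) (metis ss neg_equal_iff_equal)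
  have diff: "Nset s - Nset (x \<circ> s) = g ` Nset x"
  proof
    show "Nset s - Nset (x \<circ> s) \<subseteq> g ` Nset x"
    proof
      fix b assume b: "b \<in> Nset s - Nset (x \<circ> s)"
      have bP: "b \<in> Phi" "posr b" "\<not> posr (s b)" "posr (x (s b))" using b unfolding Nset_def by auto
      define c where "c = - s b"
      have cP: "c \<in> Phi" "posr c" unfolding c_def using nb[OF bP(3) sPhi[OF bP(1)]] negPhi sPhi bP by auto
      have "\<not> posr (x c)" unfolding c_def x_neg using nb2[OF bP(4) xPhi[OF sPhi[OF bP(1)]]] .
      then have "c \<in> Nset x" using cP unfolding Nset_def by auto
      moreover have "g c = b" unfolding g_def c_def s_neg ss by simp
      ultimately show "b \<in> g ` Nset x" by blast
    qed
  next
    show "g ` Nset x \<subseteq> Nset s - Nset (x \<circ> s)"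
    proof
      fix b assume "b \<in> g ` Nset x"
      then obtain c where c: "c \<in> Nset x" "b = g c" by auto
      have cP: "c \<in> Phi" "posr c" "\<not> posr (x c)" using c unfolding Nset_def by auto
      have "h \<bullet> c \<noteq> 0" using Xpos cP by auto
      then have "h \<bullet> c > 0" using h_posdot[OF cP(2)] by simp
      then have nsc: "\<not> posr (s c)" using refl_h_neg cP unfolding s_def by auto
      have bP: "b \<in> Phi" "posr b" unfolding c(2) g_def using nb[OF nsc sPhi[OF cP(1)]] negPhi sPhi cP by auto
      have "s b = - c" unfolding c(2) g_def s_neg ss ..
      then have "\<not> posr (s b)" "posr (x (s b))"
        using nb2[OF cP(2) cP(1)] nb[OF cP(3) xPhi[OF cP(1)]] x_neg by auto
      then show "b \<in> Nset s - Nset (x \<circ> s)" using bP unfolding Nset_def by auto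
    qed
  qed
  have "card (Nset s) = card (Nset (x \<circ> s)) + card (Nset s - Nset (x \<circ> s))"
    using sub finN by (simp add: card_Diff_subset card_mono)
  also have "card (Nset s - Nset (x \<circ> s)) = card (Nset x)" unfolding diff using inj card_image by blast
  finally have key: "card (Nset s) = card (Nset (x \<circ> s)) + card (Nset x)" .
  have "L (x \<circ> s) = card (Nset (x \<circ> s))" unfolding s_def xsh using L_N[OF xshD] .
  moreover have "L s = card (Nset s)" unfolding s_def hs(2) using L_N[OF hs(1)] .
  moreover have "L x = card (Nset x)" unfolding xs(2) using L_N[OF xs(1)] .
  ultimately show ?thesis using key unfolding x_def[symmetric] s_def by simp
qed

end

theorem proposition1p6:
  fixes Phi Delta :: "'a::euclidean_space set" and h a :: 'a
  assumes "reduced_root_system Phi"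
    and "irreducible_root_system Phi"
    and "root_basis Phi Delta"
    and "highest_root Phi Delta h"
    and "a \<in> pos_roots Phi Delta"
    and "a \<in> long_roots Phi"
  shows "int (weyl_length Delta (x_root Phi Delta h a \<circ> refl h))
         = int (weyl_length Delta (refl h)) - int (weyl_length Delta (x_root Phi Delta h a))"
proof -
  interpret RSH Phi Delta h
    by unfold_locales (use assms in \<open>auto simp: reduced_root_system_def\<close>)
  show ?thesis using main assms by blast
qed


end
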